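(* Let $p\in[1,\infty]$, $\alpha\in[0,1]$ irrational, $\theta\in[0,1)$ and $\lambda\in\mathbb{R}$. Then $\sigma(H_{\lambda,\alpha,0})=\sigma(\widetilde H_{\lambda,\alpha,\theta})=\sigma(H_{\lambda,\alpha,\theta})$.
   Context: $v_{\alpha,\theta}(n)=\chi_{[1-\alpha,1)}(n\alpha+\theta\bmod 1)$, $\widetilde v_{\alpha,\theta}(n)=\chi_{(1-\alpha,1]\cup\{0\}}(n\alpha+\theta\bmod 1)$; $(H_{\lambda,\alpha,\theta}x)_n=x_{n+1}+x_{n-1}+\lambda v_{\alpha,\theta}(n)x_n$ and $(\widetilde H_{\lambda,\alpha,\theta}x)_n=x_{n+1}+x_{n-1}+\lambda\widetilde v_{\alpha,\theta}(n)x_n$, as operators on $\ell^p(\mathbb{Z})$. *)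

theory Defs
  imports "HOL-Analysis.Analysis"
begin

text \<open>Sequence space l^p(Z) of complex sequences, p in [1, infinity] encoded as an ennreal
  (top = infinity).\<close>

definition lp :: "ennreal \<Rightarrow> (int \<Rightarrow> complex) set" where
  "lp p = (if p = top then {x. \<exists>B. \<forall>n. norm (x n) \<le> B}
           else {x. (\<lambda>n. norm (x n) powr enn2real p) summable_on UNIV})"

definition lp_norm :: "ennreal \<Rightarrow> (int \<Rightarrow> complex) \<Rightarrow> real" where
  "lp_norm p x = (if p = top then (SUP n. norm (x n))
      else (infsum (\<lambda>n. norm (x n) powr enn2real p) UNIV) powr (1 / enn2real p))"

text \<open>Bounded linear operators on l^p(Z) (only their action on l^p matters).\<close>

definition bounded_op :: "ennreal \<Rightarrow> ((int \<Rightarrow> complex) \<Rightarrow> (int \<Rightarrow> complex)) \<Rightarrow> bool" where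
  "bounded_op p T \<longleftrightarrow>
     (\<forall>x\<in>lp p. T x \<in> lp p) \<and>
     (\<forall>x\<in>lp p. \<forall>y\<in>lp p. T (\<lambda>n. x n + y n) = (\<lambda>n. T x n + T y n)) \<and>
     (\<forall>x\<in>lp p. \<forall>c. T (\<lambda>n. c * x n) = (\<lambda>n. c * T x n)) \<and>
     (\<exists>C. \<forall>x\<in>lp p. lp_norm p (T x) \<le> C * lp_norm p x)"

definition lp_spectrum :: "ennreal \<Rightarrow> ((int \<Rightarrow> complex) \<Rightarrow> (int \<Rightarrow> complex)) \<Rightarrow> complex set" where
  "lp_spectrum p T = {z. \<not> (\<exists>R. bounded_op p R \<and>
        (\<forall>x\<in>lp p. R (\<lambda>n. T x n - z * x n) = x) \<and>
        (\<forall>x\<in>lp p. (\<lambda>n. T (R x) n - z * R x n) = x))}"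

definition v_pot :: "real \<Rightarrow> real \<Rightarrow> int \<Rightarrow> real" where
  "v_pot \<alpha> \<theta> n = indicator {1 - \<alpha> ..< 1} (frac (of_int n * \<alpha> + \<theta>))"

definition vt_pot :: "real \<Rightarrow> real \<Rightarrow> int \<Rightarrow> real" where
  "vt_pot \<alpha> \<theta> n = indicator ({1 - \<alpha> <.. 1} \<union> {0}) (frac (of_int n * \<alpha> + \<theta>))"

definition H_op :: "real \<Rightarrow> real \<Rightarrow> real \<Rightarrow> (int \<Rightarrow> complex) \<Rightarrow> (int \<Rightarrow> complex)" where
  "H_op lam \<alpha> \<theta> x = (\<lambda>n. x (n + 1) + x (n - 1) + complex_of_real (lam * v_pot \<alpha> \<theta> n) * x n)"

definition Ht_op :: "real \<Rightarrow> real \<Rightarrow> real \<Rightarrow> (int \<Rightarrow> complex) \<Rightarrow> (int \<Rightarrow> complex)" where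
  "Ht_op lam \<alpha> \<theta> x = (\<lambda>n. x (n + 1) + x (n - 1) + complex_of_real (lam * vt_pot \<alpha> \<theta> n) * x n)"

end

theory Submission
  imports Defs "HOL-Library.Diagonal_Subsequence"
begin


lemma q_ge1: assumes "1 \<le> p" "p \<noteq> top" shows "1 \<le> enn2real p"
proof -
  have "enn2real 1 \<le> enn2real p" using enn2real_mono[OF assms(1)] assms(2) by (simp add: top.not_eq_extremum)
  then show ?thesis by simp
qed

lemma lp_fin: "p \<noteq> top \<Longrightarrow> x \<in> lp p \<longleftrightarrow> (\<lambda>n. norm (x n) powr enn2real p) summable_on UNIV"
  by (simp add: lp_def)
lemma lp_top: "x \<in> lp top \<longleftrightarrow> (\<exists>B. \<forall>n. norm (x n) \<le> B)"
  by (simp add: lp_def)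
lemma lpn_fin: "p \<noteq> top \<Longrightarrow> lp_norm p x = (infsum (\<lambda>n. norm (x n) powr enn2real p) UNIV) powr (1 / enn2real p)"
  by (simp add: lp_norm_def)
lemma lpn_top: "lp_norm top x = (SUP n. norm (x n))"
  by (simp add: lp_norm_def)

lemma lp_norm_cong:
  assumes "\<And>n. norm (x n) = norm (w n)"
  shows "(x \<in> lp p \<longleftrightarrow> w \<in> lp p) \<and> lp_norm p x = lp_norm p w"
  using assms by (simp add: lp_def lp_norm_def)

lemma lpn_pow:
  assumes "1 \<le> p" "p \<noteq> top" "x \<in> lp p"
  shows "lp_norm p x powr enn2real p = infsum (\<lambda>n. norm (x n) powr enn2real p) UNIV"
proof -
  have q: "1 \<le> enn2real p" using q_ge1 assms by auto
  have "0 \<le> infsum (\<lambda>n. norm (x n) powr enn2real p) UNIV" by (simp add: infsum_nonneg)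
  then show ?thesis using q by (simp add: lpn_fin[OF assms(2)] powr_powr)
qed

lemma bdd_norm: "(\<And>n. norm (x n) \<le> B) \<Longrightarrow> bdd_above (range (\<lambda>n. norm (x n)))"
  by (rule bdd_aboveI2[where M=B]) auto

lemma lp_norm_nonneg:
  assumes "x \<in> lp p" shows "0 \<le> lp_norm p x"
proof (cases "p = top")
  case True
  then obtain B where B: "\<And>n. norm (x n) \<le> B" using assms lp_top by auto
  have "norm (x 0) \<le> (SUP n. norm (x n))"
    by (rule cSUP_upper[OF _ bdd_norm[OF B]]) simp
  then show ?thesis using True lpn_top[of x] by (smt (verit) norm_ge_zero)
next
  case False
  then show ?thesis by (simp add: lpn_fin)
qed

lemma lp_coord:
  assumes "1 \<le> p" "x \<in> lp p" shows "norm (x m) \<le> lp_norm p x"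
proof (cases "p = top")
  case True
  then obtain B where B: "\<And>n. norm (x n) \<le> B" using assms lp_top by auto
  have "norm (x m) \<le> (SUP n. norm (x n))"
    by (rule cSUP_upper[OF _ bdd_norm[OF B]]) simp
  then show ?thesis using True lpn_top[of x] by simp
next
  case False
  define q where "q = enn2real p"
  have q: "1 \<le> q" using q_ge1 assms False q_def by auto
  define f where "f = (\<lambda>n. norm (x n) powr q)"
  have sf: "f summable_on UNIV" using assms False lp_fin q_def f_def by auto
  have "sum f {m} \<le> infsum f UNIV"
    by (rule finite_sum_le_infsum) (use sf f_def in auto)
  then have "norm (x m) powr q \<le> infsum f UNIV" by (simp add: f_def)
  then have "(norm (x m) powr q) powr (1/q) \<le> (infsum f UNIV) powr (1/q)"
    by (rule powr_mono2[rotated 2]) (use q in auto)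
  then show ?thesis using q by (simp add: powr_powr lpn_fin[OF False] f_def q_def)
qed

lemma summable_cmp:
  fixes f g :: "'a \<Rightarrow> real"
  assumes "g summable_on A" "\<And>x. x \<in> A \<Longrightarrow> 0 \<le> f x" "\<And>x. x \<in> A \<Longrightarrow> f x \<le> g x"
  shows "f summable_on A"
proof -
  have g0: "\<And>x. x \<in> A \<Longrightarrow> 0 \<le> g x" using assms by (meson order_trans)
  have "sum f F \<le> infsum g A" if "finite F" "F \<subseteq> A" for F
  proof -
    have "sum f F \<le> sum g F" using that assms by (intro sum_mono) auto
    also have "\<dots> \<le> infsum g A" by (rule finite_sum_le_infsum) (use assms that g0 in auto)
    finally show ?thesis .
  qed
  then show ?thesis
    by (intro nonneg_bdd_above_summable_on bdd_aboveI2[where M="infsum g A"]) (use assms in auto)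
qed

lemma lp_cmp:
  assumes "1 \<le> p" "x \<in> lp p" "0 \<le> c" "\<And>n. norm (w n) \<le> c * norm (x n)"
  shows "w \<in> lp p \<and> lp_norm p w \<le> c * lp_norm p x"
proof (cases "p = top")
  case True
  then obtain B where B: "\<And>n. norm (x n) \<le> B" using assms lp_top by auto
  have bw: "\<And>n. norm (w n) \<le> c * B" using assms B by (meson mult_left_mono order_trans)
  have "(SUP n. norm (w n)) \<le> c * (SUP n. norm (x n))"
  proof (rule cSUP_least)
    fix n
    have "norm (x n) \<le> (SUP n. norm (x n))"
      by (rule cSUP_upper[OF _ bdd_norm[OF B]]) simp
    then show "norm (w n) \<le> c * (SUP n. norm (x n))"
      using assms(4)[of n] assms(3) by (meson mult_left_mono order_trans)
  qed auto
  then show ?thesis using True bw by (auto simp: lp_top lpn_top)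
next
  case False
  define q where "q = enn2real p"
  have q: "1 \<le> q" using q_ge1 assms False q_def by auto
  define f where "f = (\<lambda>n. norm (x n) powr q)"
  define g where "g = (\<lambda>n. norm (w n) powr q)"
  have sf: "f summable_on UNIV" using assms False lp_fin q_def f_def by auto
  have le: "g n \<le> c powr q * f n" for n
  proof -
    have "g n \<le> (c * norm (x n)) powr q" unfolding g_def
      by (rule powr_mono2) (use q assms in auto)
    then show ?thesis by (simp add: powr_mult f_def)
  qed
  have sc: "(\<lambda>n. c powr q * f n) summable_on UNIV" using sf by (rule summable_on_cmult_right)
  have sg: "g summable_on UNIV" by (rule summable_cmp[OF sc]) (use le g_def in auto)
  have "infsum g UNIV \<le> infsum (\<lambda>n. c powr q * f n) UNIV"
    by (rule infsum_mono[OF sg sc]) (use le in auto)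
  also have "\<dots> = c powr q * infsum f UNIV" by (rule infsum_cmult_right) (use sf in auto)
  finally have "infsum g UNIV powr (1/q) \<le> (c powr q * infsum f UNIV) powr (1/q)"
    by (rule powr_mono2[rotated 2]) (use q g_def in \<open>auto intro: infsum_nonneg\<close>)
  also have "\<dots> = c * infsum f UNIV powr (1/q)"
    using q assms(3) by (simp add: powr_mult powr_powr)
  finally show ?thesis using sg False
    by (simp add: lp_fin lpn_fin g_def f_def q_def)
qed

lemma range_shift: "range (\<lambda>n::int. n + k) = UNIV"
proof -
  have "m \<in> range (\<lambda>n::int. n + k)" for m
  proof -
    have "m = (m - k) + k" by simp
    then show ?thesis by blast
  qed
  then show ?thesis by auto
qed

lemma lp_shift:
  assumes "x \<in> lp p"
  shows "(\<lambda>n. x (n + k)) \<in> lp p \<and> lp_norm p (\<lambda>n. x (n + k)) = lp_norm p x"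
proof (cases "p = top")
  case True
  then obtain B where B: "\<And>n. norm (x n) \<le> B" using assms lp_top by auto
  have im: "range (\<lambda>n. norm (x (n + k))) = range (\<lambda>n. norm (x n))"
  proof -
    have "range (\<lambda>n. norm (x (n + k))) = (\<lambda>n. norm (x n)) ` range (\<lambda>n. n + k)"
      by (simp only: image_image)
    then show ?thesis by (simp only: range_shift)
  qed
  have "lp_norm p (\<lambda>n. x (n + k)) = lp_norm p x"
    unfolding True lpn_top using im by simp
  moreover have "(\<lambda>n. x (n + k)) \<in> lp p" unfolding True lp_top using B by blast
  ultimately show ?thesis by blast
next
  case False
  have bij: "bij_betw (\<lambda>n::int. n + k) UNIV UNIV" by (simp add: bij_betw_def range_shift)
  define f where "f = (\<lambda>n. norm (x n) powr enn2real p)"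
  have 1: "(\<lambda>n. f (n + k)) summable_on UNIV \<longleftrightarrow> f summable_on UNIV"
    by (rule summable_on_reindex_bij_betw[OF bij])
  have 2: "infsum (\<lambda>n. f (n + k)) UNIV = infsum f UNIV"
    by (rule infsum_reindex_bij_betw[OF bij])
  have "(\<lambda>n. x (n + k)) \<in> lp p" using 1 assms unfolding lp_fin[OF False] f_def by simp
  moreover have "lp_norm p (\<lambda>n. x (n + k)) = lp_norm p x"
    using 2 unfolding lpn_fin[OF False] f_def by simp
  ultimately show ?thesis by blast
qed

lemma lp_add:
  assumes "1 \<le> p" "x \<in> lp p" "y \<in> lp p"
  shows "(\<lambda>n. x n + y n) \<in> lp p \<and> lp_norm p (\<lambda>n. x n + y n) \<le> 4 * (lp_norm p x + lp_norm p y)"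
proof (cases "p = top")
  case True
  have b: "norm (x n + y n) \<le> lp_norm p x + lp_norm p y" for n
    using lp_coord[OF assms(1,2), of n] lp_coord[OF assms(1,3), of n]
    by (meson add_mono norm_triangle_ineq order_trans)
  have "(SUP n. norm (x n + y n)) \<le> lp_norm p x + lp_norm p y"
    by (rule cSUP_least) (use b in auto)
  moreover have "0 \<le> lp_norm p x + lp_norm p y"
    using lp_norm_nonneg assms by (simp add: add_nonneg_nonneg)
  ultimately show ?thesis using True b by (auto simp: lp_top lpn_top)
next
  case False
  define q where "q = enn2real p"
  have q: "1 \<le> q" using q_ge1 assms False q_def by auto
  define f where "f = (\<lambda>n. norm (x n) powr q)"
  define g where "g = (\<lambda>n. norm (y n) powr q)"
  define h where "h = (\<lambda>n. norm (x n + y n) powr q)"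
  have sf: "f summable_on UNIV" using assms False lp_fin q_def f_def by auto
  have sg: "g summable_on UNIV" using assms False lp_fin q_def g_def by auto
  have le: "h n \<le> 2 powr q * (f n + g n)" for n
  proof -
    define m where "m = max (norm (x n)) (norm (y n))"
    have "norm (x n + y n) \<le> 2 * m" unfolding m_def
      by (smt (verit) norm_triangle_ineq)
    then have "h n \<le> (2 * m) powr q" unfolding h_def
      by (rule powr_mono2[rotated 2]) (use q in auto)
    also have "\<dots> = 2 powr q * m powr q" by (simp add: powr_mult)
    also have "m powr q \<le> f n + g n" unfolding m_def f_def g_def
      by (simp add: max_def)
    then have "2 powr q * m powr q \<le> 2 powr q * (f n + g n)" by simp
    finally show ?thesis .
  qed
  have sc: "(\<lambda>n. 2 powr q * (f n + g n)) summable_on UNIV"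
    by (rule summable_on_cmult_right, rule summable_on_add[OF sf sg])
  have sh: "h summable_on UNIV" by (rule summable_cmp[OF sc]) (use le h_def in auto)
  define M where "M = max (lp_norm p x) (lp_norm p y)"
  have M0: "0 \<le> M" using lp_norm_nonneg assms M_def by (meson max.coboundedI1)
  have Sf: "infsum f UNIV = lp_norm p x powr q" using lpn_pow assms False f_def q_def by simp
  have Sg: "infsum g UNIV = lp_norm p y powr q" using lpn_pow assms False g_def q_def by simp
  have "infsum h UNIV \<le> infsum (\<lambda>n. 2 powr q * (f n + g n)) UNIV"
    by (rule infsum_mono[OF sh sc]) (use le in auto)
  also have "\<dots> = 2 powr q * (infsum f UNIV + infsum g UNIV)"
    by (subst infsum_cmult_right) (use sf sg in \<open>auto intro: summable_on_add infsum_add\<close>)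
  also have "\<dots> \<le> 2 powr q * (2 * M powr q)"
  proof -
    have "lp_norm p x powr q \<le> M powr q" "lp_norm p y powr q \<le> M powr q"
      using q lp_norm_nonneg assms M_def by (auto intro!: powr_mono2)
    then show ?thesis using Sf Sg by simp
  qed
  also have "\<dots> \<le> 2 powr q * (2 powr q * M powr q)"
  proof -
    have "2 powr 1 \<le> 2 powr q" using q by (intro powr_mono) auto
    then show ?thesis by (simp add: mult_right_mono)
  qed
  also have "\<dots> = (4 * M) powr q"
  proof -
    have "(4::real) powr q = (2 * 2) powr q" by simp
    also have "\<dots> = 2 powr q * 2 powr q" by (rule powr_mult)
    finally show ?thesis by (simp add: powr_mult)
  qed
  finally have "infsum h UNIV powr (1/q) \<le> ((4 * M) powr q) powr (1/q)"
    by (rule powr_mono2[rotated 2]) (use q h_def in \<open>auto intro: infsum_nonneg\<close>)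
  also have "\<dots> = 4 * M" using q M0 by (simp add: powr_powr)
  also have "\<dots> \<le> 4 * (lp_norm p x + lp_norm p y)"
    using lp_norm_nonneg[OF assms(2)] lp_norm_nonneg[OF assms(3)] M_def by auto
  finally show ?thesis using sh False
    by (simp add: lp_fin lpn_fin h_def q_def)
qed

lemma lp_fatou:
  assumes "1 \<le> p" "\<And>j. Y j \<in> lp p" "\<And>j. lp_norm p (Y j) \<le> K"
    "\<And>n. (\<lambda>j. Y j n) \<longlonglongrightarrow> y n"
  shows "y \<in> lp p \<and> lp_norm p y \<le> K"
proof -
  have K0: "0 \<le> K" using lp_norm_nonneg[OF assms(2)] assms(3) by (meson order_trans)
  have yb: "norm (y n) \<le> K" for n
  proof (rule LIMSEQ_le_const2)
    show "(\<lambda>j. norm (Y j n)) \<longlonglongrightarrow> norm (y n)" by (intro tendsto_intros assms(4))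
    show "\<exists>N. \<forall>j\<ge>N. norm (Y j n) \<le> K"
      using lp_coord[OF assms(1) assms(2)] assms(3) by (meson order_trans)
  qed
  show ?thesis
  proof (cases "p = top")
    case True
    have "(SUP n. norm (y n)) \<le> K" by (rule cSUP_least) (use yb in auto)
    then show ?thesis using True yb by (auto simp: lp_top lpn_top)
  next
    case False
    define q where "q = enn2real p"
    have q: "1 \<le> q" using q_ge1 assms False q_def by auto
    define f where "f = (\<lambda>n. norm (y n) powr q)"
    have fs: "sum f F \<le> K powr q" if F: "finite F" for F
    proof (rule LIMSEQ_le_const2)
      show "(\<lambda>j. sum (\<lambda>n. norm (Y j n) powr q) F) \<longlonglongrightarrow> sum f F"
        unfolding f_def
        by (intro tendsto_sum tendsto_powr' tendsto_intros assms(4)) (use q in auto)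
      show "\<exists>N. \<forall>j\<ge>N. sum (\<lambda>n. norm (Y j n) powr q) F \<le> K powr q"
      proof (intro exI allI impI)
        fix j
        have s: "(\<lambda>n. norm (Y j n) powr q) summable_on UNIV"
          using assms(2) False lp_fin q_def by auto
        have "sum (\<lambda>n. norm (Y j n) powr q) F \<le> infsum (\<lambda>n. norm (Y j n) powr q) UNIV"
          by (rule finite_sum_le_infsum[OF s F]) auto
        also have "\<dots> = lp_norm p (Y j) powr q" using lpn_pow assms False q_def by simp
        also have "\<dots> \<le> K powr q"
          using assms(3) lp_norm_nonneg[OF assms(2)] q by (intro powr_mono2) auto
        finally show "sum (\<lambda>n. norm (Y j n) powr q) F \<le> K powr q" .
      qed
    qed
    have sf: "f summable_on UNIV"
      by (rule nonneg_bdd_above_summable_on) (use fs in \<open>auto simp: f_def intro!: bdd_aboveI2\<close>)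
    have "infsum f UNIV \<le> K powr q" by (rule infsum_le_finite_sums[OF sf]) (use fs in auto)
    then have "infsum f UNIV powr (1/q) \<le> (K powr q) powr (1/q)"
      by (rule powr_mono2[rotated 2]) (use q f_def in \<open>auto intro: infsum_nonneg\<close>)
    also have "\<dots> = K" using q K0 by (simp add: powr_powr)
    finally show ?thesis using sf False by (simp add: lp_fin lpn_fin f_def q_def)
  qed
qed



definition Jop :: "(int \<Rightarrow> real) \<Rightarrow> (int \<Rightarrow> complex) \<Rightarrow> (int \<Rightarrow> complex)" where
  "Jop a x = (\<lambda>n. x (n + 1) + x (n - 1) + complex_of_real (a n) * x n)"

lemma J_lp:
  assumes p: "1 \<le> p" and a: "\<And>n. \<bar>a n\<bar> \<le> M" and x: "x \<in> lp p"
  shows "(\<lambda>n. Jop a x n - z * x n) \<in> lp p"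
proof -
  have M0: "0 \<le> M" using a[of 0] by linarith
  have s1: "(\<lambda>n. x (n + 1)) \<in> lp p" using lp_shift[OF x] by blast
  have s2: "(\<lambda>n. x (n + -1)) \<in> lp p" using lp_shift[OF x] by blast
  have s12: "(\<lambda>n. x (n + 1) + x (n + -1)) \<in> lp p" using lp_add[OF p s1 s2] by blast
  have s3: "(\<lambda>n. (complex_of_real (a n) - z) * x n) \<in> lp p"
  proof -
    have "norm ((complex_of_real (a n) - z) * x n) \<le> (M + norm z) * norm (x n)" for n
    proof -
      have "norm (complex_of_real (a n) - z) \<le> M + norm z"
        using a[of n] by (smt (verit) norm_of_real norm_triangle_ineq4)
      then show ?thesis by (simp add: norm_mult mult_right_mono)
    qed
    then show ?thesis using lp_cmp[OF p x, of "M + norm z"] M0 by auto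
  qed
  have "(\<lambda>n. Jop a x n - z * x n) = (\<lambda>n. (x (n + 1) + x (n + -1)) + (complex_of_real (a n) - z) * x n)"
    by (simp add: Jop_def algebra_simps fun_eq_iff)
  then show ?thesis using lp_add[OF p s12 s3] by simp
qed

lemma diag_subseq:
  fixes F :: "nat \<Rightarrow> int \<Rightarrow> complex"
  assumes B: "\<And>j n. norm (F j n) \<le> B"
  shows "\<exists>r y. strict_mono r \<and> (\<forall>n. (\<lambda>i. F (r i) n) \<longlonglongrightarrow> y n)"
proof -
  define g :: "nat \<Rightarrow> int" where "g = from_nat"
  define P where "P = (\<lambda>m (s::nat \<Rightarrow> nat). convergent (\<lambda>i. F (s i) (g m)))"
  interpret subseqs P
  proof
    fix m and s :: "nat \<Rightarrow> nat" assume "strict_mono s"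
    have bd: "bounded (range (\<lambda>i. F (s i) (g m)))"
      by (rule boundedI[where B=B]) (use B in blast)
    obtain l r where "strict_mono r" "((\<lambda>i. F (s i) (g m)) \<circ> r) \<longlonglongrightarrow> l"
      using bounded_imp_convergent_subsequence[OF bd] by blast
    then show "\<exists>r'. strict_mono r' \<and> P m (s \<circ> r')"
      unfolding P_def convergent_def by (auto simp: o_def)
  qed
  have conv: "convergent (\<lambda>i. F (diagseq i) (g m))" for m
  proof -
    have "P m (diagseq \<circ> ((+) (Suc m)))"
    proof (rule diagseq_holds)
      fix r s :: "nat \<Rightarrow> nat" and n assume "strict_mono r" "P n s"
      then obtain l where l: "(\<lambda>i. F (s i) (g n)) \<longlonglongrightarrow> l" unfolding P_def convergent_def by blast
      have "((\<lambda>i. F (s i) (g n)) \<circ> r) \<longlonglongrightarrow> l" by (rule LIMSEQ_subseq_LIMSEQ[OF l \<open>strict_mono r\<close>])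
      then show "P n (s \<circ> r)" unfolding P_def convergent_def by (auto simp: o_def)
    qed
    then have "convergent (\<lambda>i. F ((diagseq \<circ> (+) (Suc m)) i) (g m))" by (simp only: P_def)
    then obtain l where l: "(\<lambda>i. F ((diagseq \<circ> (+) (Suc m)) i) (g m)) \<longlonglongrightarrow> l"
      unfolding convergent_def by blast
    have e: "(\<lambda>i. F ((diagseq \<circ> (+) (Suc m)) i) (g m)) = (\<lambda>i. F (diagseq (i + Suc m)) (g m))"
      by (rule ext) (simp add: o_def add.commute)
    have "(\<lambda>i. F (diagseq (i + Suc m)) (g m)) \<longlonglongrightarrow> l" using l unfolding e .
    then have "(\<lambda>i. F (diagseq i) (g m)) \<longlonglongrightarrow> l" by (rule LIMSEQ_offset[where f="\<lambda>i. F (diagseq i) (g m)" and k="Suc m"])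
    then show ?thesis unfolding convergent_def by blast
  qed
  have "(\<lambda>i. F (diagseq i) n) \<longlonglongrightarrow> lim (\<lambda>i. F (diagseq i) n)" for n
  proof -
    have gn: "g (to_nat n) = n" unfolding g_def by (rule from_nat_to_nat)
    have "convergent (\<lambda>i. F (diagseq i) n)" using conv[of "to_nat n"] unfolding gn .
    then show ?thesis by (simp add: convergent_LIMSEQ_iff)
  qed
  then show ?thesis
    by (intro exI[where x=diagseq] exI[where x="\<lambda>n. lim (\<lambda>i. F (diagseq i) n)"] conjI subseq_diagseq allI)
qed


lemma max_lip: "\<bar>max 0 (a::real) - max 0 b\<bar> \<le> \<bar>a - b\<bar>"
  by (auto simp: max_def abs_if)

lemma phi_lip:
  fixes Lr :: real and m0 j d :: int
  assumes "0 < Lr" "\<bar>d\<bar> = 1"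
  shows "\<bar>max 0 (1 - \<bar>real_of_int (j + d - m0)\<bar> / Lr) - max 0 (1 - \<bar>real_of_int (j - m0)\<bar> / Lr)\<bar> \<le> 1 / Lr"
proof -
  have "\<bar>(1 - \<bar>real_of_int (j + d - m0)\<bar> / Lr) - (1 - \<bar>real_of_int (j - m0)\<bar> / Lr)\<bar>
      = \<bar>\<bar>real_of_int (j + d - m0)\<bar> - \<bar>real_of_int (j - m0)\<bar>\<bar> / Lr"
    using assms(1) by (simp add: diff_divide_distrib[symmetric])
  also have "\<dots> \<le> 1 / Lr"
  proof -
    have "\<bar>\<bar>real_of_int (j + d - m0)\<bar> - \<bar>real_of_int (j - m0)\<bar>\<bar> \<le> 1"
      using assms(2) by (simp add: abs_if split: if_splits) linarith?
    then show ?thesis using assms(1) by (simp add: divide_right_mono)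
  qed
  finally show ?thesis using max_lip order_trans by blast
qed


lemma transfer:
  fixes a b :: "int \<Rightarrow> real"
  assumes p: "1 \<le> p" and ba: "\<And>n. \<bar>a n\<bar> \<le> M" and bb: "\<And>n. \<bar>b n\<bar> \<le> M"
    and appr: "\<And>N::nat. \<exists>k. \<forall>n. \<bar>n\<bar> \<le> int N \<longrightarrow> b n = a (n + k)"
    and z: "z \<notin> lp_spectrum p (Jop a)"
  shows "z \<notin> lp_spectrum p (Jop b)"
proof -
  obtain R where Rb: "bounded_op p R" and R1: "\<forall>x\<in>lp p. R (\<lambda>n. Jop a x n - z * x n) = x"
     and R2: "\<forall>x\<in>lp p. (\<lambda>n. Jop a (R x) n - z * R x n) = x"
    using z unfolding lp_spectrum_def by blast
  have Rlp: "\<And>x. x \<in> lp p \<Longrightarrow> R x \<in> lp p" using Rb unfolding bounded_op_def by blast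
  obtain C where RC: "\<And>x. x \<in> lp p \<Longrightarrow> lp_norm p (R x) \<le> C * lp_norm p x"
    using Rb unfolding bounded_op_def by blast
  define T where "T = (\<lambda>y n. Jop b y n - z * y n)"
  have Tlp: "T y \<in> lp p" if "y \<in> lp p" for y unfolding T_def by (rule J_lp[OF p bb that])
  have inj0: "y m0 = 0" if y: "y \<in> lp p" and Ty: "T y = (\<lambda>n. 0)" for y m0
  proof -
    have bound: "norm (y m0) \<le> \<bar>C\<bar> * (8 * lp_norm p y) / real L" if L: "L \<ge> 1" for L :: nat
    proof -
      define Lr where "Lr = real L"
      have Lr: "Lr \<ge> 1" using L Lr_def by simp
      define \<phi> where "\<phi> = (\<lambda>j::int. max 0 (1 - \<bar>real_of_int (j - m0)\<bar> / Lr))"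
      have \<phi>01: "0 \<le> \<phi> j \<and> \<phi> j \<le> 1" for j
        unfolding \<phi>_def using Lr by auto
      have \<phi>m0: "\<phi> m0 = 1" by (simp add: \<phi>_def)
      have \<phi>supp: "\<bar>j\<bar> \<le> int (nat \<bar>m0\<bar> + L)" if "\<phi> j \<noteq> 0" for j
      proof -
        have "0 < 1 - \<bar>real_of_int (j - m0)\<bar> / Lr"
        proof (rule ccontr)
          assume "\<not> 0 < 1 - \<bar>real_of_int (j - m0)\<bar> / Lr"
          then have "\<phi> j = 0" unfolding \<phi>_def by simp
          then show False using that by simp
        qed
        then have "\<bar>real_of_int (j - m0)\<bar> / Lr < 1" by simp
        then have "\<bar>real_of_int (j - m0)\<bar> < Lr" using Lr by (simp add: divide_less_eq)
        then have "\<bar>j - m0\<bar> < int L" unfolding Lr_def by linarith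
        then show ?thesis by linarith
      qed
      have \<phi>lip1: "\<bar>\<phi> (j + 1) - \<phi> j\<bar> \<le> 1 / Lr" for j
        unfolding \<phi>_def using phi_lip[of Lr 1 j m0] Lr by simp
      have \<phi>lip2: "\<bar>\<phi> (j - 1) - \<phi> j\<bar> \<le> 1 / Lr" for j
        unfolding \<phi>_def using phi_lip[of Lr "-1" j m0] Lr by simp
      obtain k where k: "\<forall>n. \<bar>n\<bar> \<le> int (nat \<bar>m0\<bar> + L) \<longrightarrow> b n = a (n + k)" using appr by blast
      define w where "w = (\<lambda>n. complex_of_real (\<phi> n) * y n)"
      have wlp: "w \<in> lp p"
      proof -
        have "norm (w n) \<le> 1 * norm (y n)" for n
          using \<phi>01[of n] by (simp add: w_def norm_mult mult_left_le_one_le)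
        then show ?thesis using lp_cmp[OF p y, of 1 w] by simp
      qed
      define u where "u = (\<lambda>n. w (n + - k))"
      have ulp: "u \<in> lp p" and un: "lp_norm p u = lp_norm p w"
        using lp_shift[OF wlp, of "-k"] u_def by auto
      have "norm (y m0) = norm (u (m0 + k))" by (simp add: u_def w_def \<phi>m0)
      also have "\<dots> \<le> lp_norm p u" by (rule lp_coord[OF p ulp])
      finally have y1: "norm (y m0) \<le> lp_norm p u" .
      define V where "V = (\<lambda>n. Jop a u n - z * u n)"
      have eq: "V n = complex_of_real (\<phi> (n - k + 1) - \<phi> (n - k)) * y (n - k + 1)
                    + complex_of_real (\<phi> (n - k - 1) - \<phi> (n - k)) * y (n - k - 1)" for n
      proof -
        define m where "m = n - k"
        have u1: "u (n + 1) = complex_of_real (\<phi> (m + 1)) * y (m + 1)"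
          unfolding u_def w_def m_def by (simp add: algebra_simps)
        have u2: "u (n - 1) = complex_of_real (\<phi> (m - 1)) * y (m - 1)"
          unfolding u_def w_def m_def by (simp add: algebra_simps)
        have u0: "u n = complex_of_real (\<phi> m) * y m"
          unfolding u_def w_def m_def by (simp add: algebra_simps)
        have key: "complex_of_real (\<phi> m) * (complex_of_real (a n) * y m - z * y m)
                 = complex_of_real (\<phi> m) * (- (y (m + 1) + y (m - 1)))"
        proof (cases "\<phi> m = 0")
          case True then show ?thesis by simp
        next
          case False
          then have "b m = a (m + k)" using k \<phi>supp by blast
          then have abm: "a n = b m" using m_def by simp
          have "T y m = 0" using Ty by (simp add: fun_eq_iff)
          then have "y (m + 1) + y (m - 1) + complex_of_real (b m) * y m - z * y m = 0"
            by (simp add: T_def Jop_def)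
          then have "complex_of_real (a n) * y m - z * y m = - (y (m + 1) + y (m - 1))"
            unfolding abm by (simp add: algebra_simps add_eq_0_iff)
          then show ?thesis by simp
        qed
        have "V n = u (n + 1) + u (n - 1) + (complex_of_real (a n) * u n - z * u n)"
          by (simp add: V_def Jop_def)
        also have "\<dots> = complex_of_real (\<phi> (m + 1)) * y (m + 1) + complex_of_real (\<phi> (m - 1)) * y (m - 1)
             + complex_of_real (\<phi> m) * (complex_of_real (a n) * y m - z * y m)"
          unfolding u1 u2 u0 by (simp add: algebra_simps)
        also have "\<dots> = complex_of_real (\<phi> (m + 1) - \<phi> m) * y (m + 1)
                    + complex_of_real (\<phi> (m - 1) - \<phi> m) * y (m - 1)"
          unfolding key by (simp add: algebra_simps)
        finally show ?thesis unfolding m_def .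
      qed
      define G where "G = (\<lambda>n. complex_of_real (norm (y (n + (1 - k)))) + complex_of_real (norm (y (n + (-1 - k)))))"
      have Vle: "norm (V n) \<le> (1 / Lr) * norm (G n)" for n
      proof -
        have e1: "n - k + 1 = n + (1 - k)" "n - k - 1 = n + (-1 - k)" by simp_all
        have "norm (V n) \<le> \<bar>\<phi> (n - k + 1) - \<phi> (n - k)\<bar> * norm (y (n - k + 1))
                    + \<bar>\<phi> (n - k - 1) - \<phi> (n - k)\<bar> * norm (y (n - k - 1))"
          unfolding eq by (rule order_trans[OF norm_triangle_ineq]) (simp only: norm_mult norm_of_real order_refl)
        also have "\<dots> \<le> (1 / Lr) * norm (y (n - k + 1)) + (1 / Lr) * norm (y (n - k - 1))"
          by (intro add_mono mult_right_mono) (use \<phi>lip1 \<phi>lip2 in \<open>auto simp del: of_int_diff\<close>)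
        also have "\<dots> = (1 / Lr) * norm (G n)"
        proof -
          have "norm (G n) = norm (y (n + (1 - k))) + norm (y (n + (-1 - k)))"
            unfolding G_def by (simp only: of_real_add[symmetric] norm_of_real) simp
          then show ?thesis unfolding e1 by (simp add: algebra_simps)
        qed
        finally show ?thesis .
      qed
      have y1lp: "(\<lambda>n. complex_of_real (norm (y (n + (1 - k))))) \<in> lp p \<and>
                  lp_norm p (\<lambda>n. complex_of_real (norm (y (n + (1 - k))))) = lp_norm p y"
        using lp_shift[OF y, of "1 - k"] lp_norm_cong[of "\<lambda>n. complex_of_real (norm (y (n + (1 - k))))" "\<lambda>n. y (n + (1 - k))" p]
        by simp
      have y2lp: "(\<lambda>n. complex_of_real (norm (y (n + (-1 - k))))) \<in> lp p \<and>
                  lp_norm p (\<lambda>n. complex_of_real (norm (y (n + (-1 - k))))) = lp_norm p y"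
        using lp_shift[OF y, of "-1 - k"] lp_norm_cong[of "\<lambda>n. complex_of_real (norm (y (n + (-1 - k))))" "\<lambda>n. y (n + (-1 - k))" p]
        by simp
      have Glp: "G \<in> lp p \<and> lp_norm p G \<le> 8 * lp_norm p y"
        using lp_add[OF p y1lp[THEN conjunct1] y2lp[THEN conjunct1]] y1lp y2lp unfolding G_def by simp
      have Vlp: "V \<in> lp p \<and> lp_norm p V \<le> (1 / Lr) * lp_norm p G"
        by (rule lp_cmp[OF p Glp[THEN conjunct1]]) (use Lr Vle in auto)
      have "u = R V" using R1 ulp unfolding V_def by simp
      then have "lp_norm p u \<le> C * lp_norm p V" using RC Vlp by simp
      also have "\<dots> \<le> \<bar>C\<bar> * lp_norm p V"
        using lp_norm_nonneg Vlp by (intro mult_right_mono) auto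
      also have "\<dots> \<le> \<bar>C\<bar> * ((1 / Lr) * (8 * lp_norm p y))"
      proof -
        have "(1 / Lr) * lp_norm p G \<le> (1 / Lr) * (8 * lp_norm p y)"
          using Glp Lr by (intro mult_left_mono) auto
        then show ?thesis using Vlp by (intro mult_left_mono) auto
      qed
      finally show ?thesis using y1 Lr_def by simp
    qed
    show ?thesis
    proof (rule ccontr)
      assume "y m0 \<noteq> 0"
      then have e: "0 < norm (y m0)" by simp
      define K where "K = \<bar>C\<bar> * (8 * lp_norm p y)"
      obtain L :: nat where L: "K / norm (y m0) < real L" using reals_Archimedean2 by blast
      define L' where "L' = max 1 L"
      have L'1: "L' \<ge> 1" unfolding L'_def by simp
      have "K / norm (y m0) < real L'" using L unfolding L'_def by linarith
      then have "K < real L' * norm (y m0)" using e by (simp add: field_simps)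
      then have "K / real L' < norm (y m0)" using L'1 by (simp add: field_simps)
      then show False using bound[OF L'1] unfolding K_def by simp
    qed
  qed
  have Tadd: "T (\<lambda>n. f n + g n) = (\<lambda>n. T f n + T g n)" for f g
    by (simp add: T_def Jop_def fun_eq_iff algebra_simps)
  have Tmul: "T (\<lambda>n. c * f n) = (\<lambda>n. c * T f n)" for c f
    by (simp add: T_def Jop_def fun_eq_iff algebra_simps)
  have uniq: "y1 = y2" if y12: "y1 \<in> lp p" "y2 \<in> lp p" and Teq: "T y1 = T y2" for y1 y2
  proof -
    have "(\<lambda>n. (-1) * y2 n) \<in> lp p" using lp_cmp[OF p y12(2), of 1] by (simp add: norm_mult)
    then have dlp: "(\<lambda>n. y1 n + (-1) * y2 n) \<in> lp p" using lp_add[OF p y12(1)] by blast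
    have "T (\<lambda>n. y1 n + (-1) * y2 n) = (\<lambda>n. 0)"
      unfolding Tadd Tmul Teq by simp
    then have "y1 n + (-1) * y2 n = 0" for n using inj0[OF dlp] by blast
    then show ?thesis by (simp add: fun_eq_iff)
  qed
  have ex: "\<exists>y. y \<in> lp p \<and> T y = x \<and> lp_norm p y \<le> \<bar>C\<bar> * lp_norm p x" if x: "x \<in> lp p" for x
  proof -
    have "\<forall>N. \<exists>k. \<forall>n. \<bar>n\<bar> \<le> int N \<longrightarrow> b n = a (n + k)" using appr by blast
    then obtain kk where kk: "\<And>N n. \<bar>n\<bar> \<le> int N \<Longrightarrow> b n = a (n + kk N)"
      by (metis choice)
    define X where "X = (\<lambda>j n. x (n + - kk j))"
    have Xlp: "X j \<in> lp p" and Xn: "lp_norm p (X j) = lp_norm p x" for j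
      using lp_shift[OF x, of "- kk j"] unfolding X_def by auto
    define U where "U = (\<lambda>j. R (X j))"
    have Ulp: "U j \<in> lp p" for j unfolding U_def by (rule Rlp[OF Xlp])
    have Un: "lp_norm p (U j) \<le> \<bar>C\<bar> * lp_norm p x" for j
    proof -
      have "lp_norm p (U j) \<le> C * lp_norm p x" unfolding U_def using RC[OF Xlp] Xn by simp
      also have "\<dots> \<le> \<bar>C\<bar> * lp_norm p x" using lp_norm_nonneg[OF x] by (intro mult_right_mono) auto
      finally show ?thesis .
    qed
    define Y where "Y = (\<lambda>j n. U j (n + kk j))"
    have Ylp: "Y j \<in> lp p" and Yn: "lp_norm p (Y j) \<le> \<bar>C\<bar> * lp_norm p x" for j
      using lp_shift[OF Ulp, of j "kk j"] Un[of j] unfolding Y_def by auto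
    have YT: "T (Y j) n = x n" if "\<bar>n\<bar> \<le> int j" for j n
    proof -
      have R2j: "Jop a (U j) (n + kk j) - z * U j (n + kk j) = X j (n + kk j)"
        using R2 Xlp[of j] unfolding U_def by (metis (no_types, lifting))
      have bn: "b n = a (n + kk j)" using kk[OF that] .
      have "T (Y j) n = Jop a (U j) (n + kk j) - z * U j (n + kk j)"
      proof -
        have i1: "n + 1 + kk j = n + kk j + 1" and i2: "n - 1 + kk j = n + kk j - 1" by simp_all
        show ?thesis unfolding T_def Jop_def Y_def bn i1 i2 by simp
      qed
      also have "\<dots> = x n" unfolding R2j X_def by simp
      finally show ?thesis .
    qed
    have Yb: "norm (Y j n) \<le> \<bar>C\<bar> * lp_norm p x" for j n
      using lp_coord[OF p Ylp[of j], of n] Yn[of j] by linarith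
    obtain r y where r: "strict_mono r" and ry: "\<And>n. (\<lambda>i. Y (r i) n) \<longlonglongrightarrow> y n"
      using diag_subseq[of Y "\<bar>C\<bar> * lp_norm p x", OF Yb] by blast
    have yl: "y \<in> lp p \<and> lp_norm p y \<le> \<bar>C\<bar> * lp_norm p x"
      by (rule lp_fatou[OF p]) (use Ylp Yn ry in auto)
    have "T y n = x n" for n
    proof -
      have lim: "(\<lambda>i. T (Y (r i)) n) \<longlonglongrightarrow> T y n"
        unfolding T_def Jop_def by (intro tendsto_intros ry)
      have ev: "eventually (\<lambda>i. T (Y (r i)) n = x n) sequentially"
      proof (rule eventually_sequentiallyI[where c="nat \<bar>n\<bar>"])
        fix i assume "nat \<bar>n\<bar> \<le> i"
        moreover have "i \<le> r i" using seq_suble[OF r] .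
        ultimately have "\<bar>n\<bar> \<le> int (r i)" by linarith
        then show "T (Y (r i)) n = x n" by (rule YT)
      qed
      have "(\<lambda>i. x n) \<longlonglongrightarrow> T y n"
        using lim ev by (rule Lim_transform_eventually)
      then show ?thesis by (simp add: LIMSEQ_const_iff)
    qed
    then have "T y = x" by (simp add: fun_eq_iff)
    then show ?thesis using yl by blast
  qed
  define R' where "R' = (\<lambda>x. SOME y. y \<in> lp p \<and> T y = x \<and> lp_norm p y \<le> \<bar>C\<bar> * lp_norm p x)"
  have R'p: "R' x \<in> lp p \<and> T (R' x) = x \<and> lp_norm p (R' x) \<le> \<bar>C\<bar> * lp_norm p x" if "x \<in> lp p" for x
    unfolding R'_def by (rule someI_ex[OF ex[OF that]])
  have "bounded_op p R'"
    unfolding bounded_op_def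
  proof (intro conjI ballI allI)
    fix x assume "x \<in> lp p" then show "R' x \<in> lp p" using R'p by blast
  next
    fix x y assume xy: "x \<in> lp p" "y \<in> lp p"
    have s: "(\<lambda>n. x n + y n) \<in> lp p" using lp_add[OF p xy] by blast
    have s2: "(\<lambda>n. R' x n + R' y n) \<in> lp p" using lp_add[OF p] R'p xy by blast
    show "R' (\<lambda>n. x n + y n) = (\<lambda>n. R' x n + R' y n)"
    proof (rule uniq)
      show "R' (\<lambda>n. x n + y n) \<in> lp p" using R'p[OF s] by blast
      show "(\<lambda>n. R' x n + R' y n) \<in> lp p" by (rule s2)
      show "T (R' (\<lambda>n. x n + y n)) = T (\<lambda>n. R' x n + R' y n)"
        unfolding Tadd using R'p[OF s] R'p[OF xy(1)] R'p[OF xy(2)] by simp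
    qed
  next
    fix x and c :: complex assume x: "x \<in> lp p"
    have s: "(\<lambda>n. c * x n) \<in> lp p" using lp_cmp[OF p x, of "norm c"] by (simp add: norm_mult)
    have s2: "(\<lambda>n. c * R' x n) \<in> lp p" using lp_cmp[OF p, of "R' x" "norm c"] R'p[OF x] by (simp add: norm_mult)
    show "R' (\<lambda>n. c * x n) = (\<lambda>n. c * R' x n)"
    proof (rule uniq)
      show "R' (\<lambda>n. c * x n) \<in> lp p" using R'p[OF s] by blast
      show "(\<lambda>n. c * R' x n) \<in> lp p" by (rule s2)
      show "T (R' (\<lambda>n. c * x n)) = T (\<lambda>n. c * R' x n)"
        unfolding Tmul using R'p[OF s] R'p[OF x] by simp
    qed
  next
    show "\<exists>C. \<forall>x\<in>lp p. lp_norm p (R' x) \<le> C * lp_norm p x"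
      using R'p by blast
  qed
  moreover have "\<forall>x\<in>lp p. R' (\<lambda>n. Jop b x n - z * x n) = x"
  proof
    fix x assume x: "x \<in> lp p"
    have "R' (T x) = x"
      by (rule uniq) (use R'p[OF Tlp[OF x]] x in auto)
    then show "R' (\<lambda>n. Jop b x n - z * x n) = x" unfolding T_def .
  qed
  moreover have "\<forall>x\<in>lp p. (\<lambda>n. Jop b (R' x) n - z * R' x n) = x"
    using R'p unfolding T_def by blast
  ultimately show ?thesis unfolding lp_spectrum_def by blast
qed



lemma frac_shift_eq:
  assumes "0 \<le> w" "w < 1" "x - w - (y - frac y) \<in> \<int>"
  shows "frac x = w"
proof -
  have "y - frac y \<in> \<int>" by (simp add: frac_def)
  then have "x - w \<in> \<int>" using assms(3)
    by (metis Ints_add diff_add_cancel)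
  then show ?thesis using assms frac_unique_iff by blast
qed

lemma appr_v:
  assumes irr: "\<alpha> \<notin> \<rat>" and a0: "0 \<le> \<alpha>" and a1: "\<alpha> \<le> 1"
  shows "\<exists>k. \<forall>n. \<bar>n\<bar> \<le> int N \<longrightarrow> v_pot \<alpha> \<theta>2 n = v_pot \<alpha> \<theta>1 (n + k) \<and> v_pot \<alpha> \<theta>2 n = vt_pot \<alpha> \<theta>1 (n + k)"
proof -
  have "\<alpha> \<noteq> 0" "\<alpha> \<noteq> 1" using irr by auto
  then have ap: "0 < \<alpha>" "\<alpha> < 1" using a0 a1 by auto
  define t where "t = (\<lambda>n::int. frac (of_int n * \<alpha> + \<theta>2))"
  have t01: "0 \<le> t n" "t n < 1" for n unfolding t_def by (simp_all add: frac_lt_1)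
  define e where "e = (\<lambda>n. if t n < 1 - \<alpha> then min (1 - t n) (1 - \<alpha> - t n) else 1 - t n)"
  have epos: "0 < e n" for n unfolding e_def using t01[of n] by auto
  define S where "S = {- int N..int N}"
  have Sf: "finite (e ` S)" and Sne: "e ` S \<noteq> {}" unfolding S_def by auto
  define \<epsilon> where "\<epsilon> = Min (e ` S)"
  have \<epsilon>pos: "0 < \<epsilon>" unfolding \<epsilon>_def using Min_gr_iff[OF Sf Sne] epos by auto
  have \<epsilon>le: "\<epsilon> \<le> e n" if "n \<in> S" for n unfolding \<epsilon>_def using Min_le[OF Sf] that by auto
  have "\<epsilon> / 2 > 0" using \<epsilon>pos by simp
  then obtain h k where hk: "\<bar>of_int k * \<alpha> - of_int h - (\<theta>2 - \<theta>1 + \<epsilon> / 2)\<bar> < \<epsilon> / 2"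
    using sequence_of_fractional_parts_is_dense[OF irr] by metis
  define d where "d = of_int k * \<alpha> + \<theta>1 - \<theta>2 - of_int h"
  have d: "0 < d" "d < \<epsilon>" using hk unfolding d_def abs_less_iff by linarith+
  have "v_pot \<alpha> \<theta>2 n = v_pot \<alpha> \<theta>1 (n + k) \<and> v_pot \<alpha> \<theta>2 n = vt_pot \<alpha> \<theta>1 (n + k)"
    if n: "\<bar>n\<bar> \<le> int N" for n
  proof -
    have nS: "n \<in> S" unfolding S_def using n by auto
    have den: "d < e n" using \<epsilon>le[OF nS] d by simp
    have fr: "frac (of_int (n + k) * \<alpha> + \<theta>1) = t n + d"
    proof (rule frac_shift_eq[where y="of_int n * \<alpha> + \<theta>2"])
      show "0 \<le> t n + d" using t01[of n] d by simp
      show "t n + d < 1" using den t01[of n] unfolding e_def by (auto split: if_splits)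
      show "of_int (n + k) * \<alpha> + \<theta>1 - (t n + d) - (of_int n * \<alpha> + \<theta>2 - frac (of_int n * \<alpha> + \<theta>2)) \<in> \<int>"
        unfolding t_def d_def by (simp add: algebra_simps)
    qed
    have v2: "v_pot \<alpha> \<theta>2 n = indicator {1 - \<alpha>..<1} (t n)" unfolding v_pot_def t_def ..
    have A: "v_pot \<alpha> \<theta>1 (n + k) = indicator {1 - \<alpha>..<1} (t n + d)" unfolding v_pot_def fr ..
    have B: "vt_pot \<alpha> \<theta>1 (n + k) = indicator ({1 - \<alpha><..1} \<union> {0}) (t n + d)" unfolding vt_pot_def fr ..
    show ?thesis
    proof (cases "t n < 1 - \<alpha>")
      case True
      then have "t n + d < 1 - \<alpha>" using den unfolding e_def by simp
      then show ?thesis using True t01[of n] d unfolding v2 A B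
        by (auto simp: indicator_def)
    next
      case False
      then have "t n + d < 1" using den unfolding e_def by simp
      then show ?thesis using False t01[of n] d unfolding v2 A B
        by (auto simp: indicator_def)
    qed
  qed
  then show ?thesis by blast
qed

lemma appr_vt:
  assumes irr: "\<alpha> \<notin> \<rat>" and a0: "0 \<le> \<alpha>" and a1: "\<alpha> \<le> 1"
  shows "\<exists>k. \<forall>n. \<bar>n\<bar> \<le> int N \<longrightarrow> vt_pot \<alpha> \<theta>2 n = v_pot \<alpha> \<theta>1 (n + k) \<and> vt_pot \<alpha> \<theta>2 n = vt_pot \<alpha> \<theta>1 (n + k)"
proof -
  have "\<alpha> \<noteq> 0" "\<alpha> \<noteq> 1" using irr by auto
  then have ap: "0 < \<alpha>" "\<alpha> < 1" using a0 a1 by auto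
  define t where "t = (\<lambda>n::int. frac (of_int n * \<alpha> + \<theta>2))"
  have t01: "0 \<le> t n" "t n < 1" for n unfolding t_def by (simp_all add: frac_lt_1)
  define e where "e = (\<lambda>n. if t n = 0 then \<alpha> else if 1 - \<alpha> < t n then t n - (1 - \<alpha>) else t n)"
  have epos: "0 < e n" for n unfolding e_def using t01[of n] ap by auto
  define S where "S = {- int N..int N}"
  have Sf: "finite (e ` S)" and Sne: "e ` S \<noteq> {}" unfolding S_def by auto
  define \<epsilon> where "\<epsilon> = Min (e ` S)"
  have \<epsilon>pos: "0 < \<epsilon>" unfolding \<epsilon>_def using Min_gr_iff[OF Sf Sne] epos by auto
  have \<epsilon>le: "\<epsilon> \<le> e n" if "n \<in> S" for n unfolding \<epsilon>_def using Min_le[OF Sf] that by auto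
  have "\<epsilon> / 2 > 0" using \<epsilon>pos by simp
  then obtain h k where hk: "\<bar>of_int k * \<alpha> - of_int h - (\<theta>2 - \<theta>1 - \<epsilon> / 2)\<bar> < \<epsilon> / 2"
    using sequence_of_fractional_parts_is_dense[OF irr] by metis
  define d where "d = - (of_int k * \<alpha> + \<theta>1 - \<theta>2 - of_int h)"
  have d: "0 < d" "d < \<epsilon>" using hk unfolding d_def abs_less_iff by linarith+
  have "vt_pot \<alpha> \<theta>2 n = v_pot \<alpha> \<theta>1 (n + k) \<and> vt_pot \<alpha> \<theta>2 n = vt_pot \<alpha> \<theta>1 (n + k)"
    if n: "\<bar>n\<bar> \<le> int N" for n
  proof -
    have nS: "n \<in> S" unfolding S_def using n by auto
    have den: "d < e n" using \<epsilon>le[OF nS] d by simp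
    have v2: "vt_pot \<alpha> \<theta>2 n = indicator ({1 - \<alpha><..1} \<union> {0}) (t n)" unfolding vt_pot_def t_def ..
    show ?thesis
    proof (cases "t n = 0")
      case True
      have fr: "frac (of_int (n + k) * \<alpha> + \<theta>1) = 1 - d"
      proof (rule frac_shift_eq[where y="of_int n * \<alpha> + \<theta>2"])
        show "0 \<le> 1 - d" using den ap True unfolding e_def by simp
        show "1 - d < 1" using d by simp
        have "of_int (n + k) * \<alpha> + \<theta>1 - (1 - d) - (of_int n * \<alpha> + \<theta>2 - frac (of_int n * \<alpha> + \<theta>2))
              = of_int (h - 1)" using True unfolding t_def d_def by (simp add: algebra_simps)
        then show "of_int (n + k) * \<alpha> + \<theta>1 - (1 - d) - (of_int n * \<alpha> + \<theta>2 - frac (of_int n * \<alpha> + \<theta>2)) \<in> \<int>"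
          by (metis Ints_of_int)
      qed
      have A: "v_pot \<alpha> \<theta>1 (n + k) = indicator {1 - \<alpha>..<1} (1 - d)" unfolding v_pot_def fr ..
      have B: "vt_pot \<alpha> \<theta>1 (n + k) = indicator ({1 - \<alpha><..1} \<union> {0}) (1 - d)" unfolding vt_pot_def fr ..
      have "d < \<alpha>" using den True unfolding e_def by simp
      then show ?thesis using True d unfolding v2 A B
        by (auto simp: indicator_def)
    next
      case False
      have fr: "frac (of_int (n + k) * \<alpha> + \<theta>1) = t n - d"
      proof (rule frac_shift_eq[where y="of_int n * \<alpha> + \<theta>2"])
        show "0 \<le> t n - d" using den False t01[of n] ap unfolding e_def by (auto split: if_splits)
        show "t n - d < 1" using d t01[of n] by simp
        show "of_int (n + k) * \<alpha> + \<theta>1 - (t n - d) - (of_int n * \<alpha> + \<theta>2 - frac (of_int n * \<alpha> + \<theta>2)) \<in> \<int>"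
          unfolding t_def d_def by (simp add: algebra_simps)
      qed
      have A: "v_pot \<alpha> \<theta>1 (n + k) = indicator {1 - \<alpha>..<1} (t n - d)" unfolding v_pot_def fr ..
      have B: "vt_pot \<alpha> \<theta>1 (n + k) = indicator ({1 - \<alpha><..1} \<union> {0}) (t n - d)" unfolding vt_pot_def fr ..
      show ?thesis
      proof (cases "1 - \<alpha> < t n")
        case True
        then have "1 - \<alpha> < t n - d" using den False unfolding e_def by simp
        then show ?thesis using True False t01[of n] d unfolding v2 A B
          by (auto simp: indicator_def)
      next
        case c2: False
        then have "0 < t n - d" using den False unfolding e_def by simp
        then show ?thesis using c2 False t01[of n] d unfolding v2 A B
          by (auto simp: indicator_def)
      qed
    qed
  qed
  then show ?thesis by blast
qed


lemma spec_eq: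
  fixes a b :: "int \<Rightarrow> real"
  assumes p: "1 \<le> p" and ba: "\<And>n. \<bar>a n\<bar> \<le> M" and bb: "\<And>n. \<bar>b n\<bar> \<le> M"
   and ab: "\<And>N::nat. \<exists>k. \<forall>n. \<bar>n\<bar> \<le> int N \<longrightarrow> b n = a (n + k)"
   and ba': "\<And>N::nat. \<exists>k. \<forall>n. \<bar>n\<bar> \<le> int N \<longrightarrow> a n = b (n + k)"
  shows "lp_spectrum p (Jop a) = lp_spectrum p (Jop b)"
  using transfer[OF p ba bb ab] transfer[OF p bb ba ba'] by blast

theorem proposition5p2:
  fixes p :: ennreal and \<alpha> \<theta> lam :: real
  assumes "1 \<le> p"
    and "0 \<le> \<alpha>" "\<alpha> \<le> 1" "\<alpha> \<notin> \<rat>"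
    and "0 \<le> \<theta>" "\<theta> < 1"
  shows "lp_spectrum p (H_op lam \<alpha> 0) = lp_spectrum p (Ht_op lam \<alpha> \<theta>)
       \<and> lp_spectrum p (Ht_op lam \<alpha> \<theta>) = lp_spectrum p (H_op lam \<alpha> \<theta>)"
proof -
  have H: "H_op lam \<alpha> t = Jop (\<lambda>n. lam * v_pot \<alpha> t n)" for t
    by (rule ext) (simp add: H_op_def Jop_def)
  have Ht: "Ht_op lam \<alpha> t = Jop (\<lambda>n. lam * vt_pot \<alpha> t n)" for t
    by (rule ext) (simp add: Ht_op_def Jop_def)
  have bv: "\<bar>lam * v_pot \<alpha> t n\<bar> \<le> \<bar>lam\<bar>" for t n
    by (simp add: v_pot_def indicator_def abs_mult)
  have bvt: "\<bar>lam * vt_pot \<alpha> t n\<bar> \<le> \<bar>lam\<bar>" for t n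
    by (simp add: vt_pot_def indicator_def abs_mult)
  have av: "\<exists>k. \<forall>n. \<bar>n\<bar> \<le> int N \<longrightarrow> lam * v_pot \<alpha> t2 n = lam * v_pot \<alpha> t1 (n + k)"
    "\<exists>k. \<forall>n. \<bar>n\<bar> \<le> int N \<longrightarrow> lam * v_pot \<alpha> t2 n = lam * vt_pot \<alpha> t1 (n + k)" for N t1 t2
    using appr_v[OF assms(4,2,3), of N t2 t1] by metis+
  have avt: "\<exists>k. \<forall>n. \<bar>n\<bar> \<le> int N \<longrightarrow> lam * vt_pot \<alpha> t2 n = lam * v_pot \<alpha> t1 (n + k)"
    "\<exists>k. \<forall>n. \<bar>n\<bar> \<le> int N \<longrightarrow> lam * vt_pot \<alpha> t2 n = lam * vt_pot \<alpha> t1 (n + k)" for N t1 t2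
    using appr_vt[OF assms(4,2,3), of N t2 t1] by metis+
  have 1: "lp_spectrum p (H_op lam \<alpha> 0) = lp_spectrum p (Ht_op lam \<alpha> \<theta>)"
    unfolding H Ht by (rule spec_eq[OF assms(1) bv bvt avt(1) av(2)])
  have 2: "lp_spectrum p (Ht_op lam \<alpha> \<theta>) = lp_spectrum p (H_op lam \<alpha> \<theta>)"
    unfolding H Ht by (rule spec_eq[OF assms(1) bvt bv av(2) avt(1)])
  show ?thesis using 1 2 by blast
qed

end
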